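(* Let $G$ be an $n$-vertex digraph which is an orientation of a connected simple graph containing exactly one cycle, and suppose $G$ has no sources. Then $G$ has a quasi-kernel with at most $\frac{n+2}{3}$ vertices. Moreover, the bound is sharp: for every $n\ge 4$ with $n\equiv 1\pmod 3$, the cyclically oriented cycle on $n$ vertices has no quasi-kernel with fewer than $\frac{n+2}{3}$ vertices.
   Context: Digraphs are finite, without loops and without multiple edges in the same direction. A source is a vertex of in-degree $0$. For $V'\subseteq V(G)$, $\Gamma^+(V')$ is the set of out-neighbours of vertices of $V'$ and $\Gamma^+_2(V')=V'\cup\Gamma^+(V')\cup\Gamma^+(\Gamma^+(V'))$. A quasi-kernel is an independent set $Q$ with $\Gamma^+_2(Q)=V(G)$. *)

theory Defs
  imports Main
begin

definition digraph :: "'a set \<Rightarrow> ('a \<times> 'a) set \<Rightarrow> bool" where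
  "digraph V A \<longleftrightarrow> finite V \<and> A \<subseteq> V \<times> V \<and> (\<forall>v. (v, v) \<notin> A)"

definition source :: "'a set \<Rightarrow> ('a \<times> 'a) set \<Rightarrow> 'a \<Rightarrow> bool" where
  "source V A v \<longleftrightarrow> v \<in> V \<and> (\<forall>u. (u, v) \<notin> A)"

definition out_nbrs :: "('a \<times> 'a) set \<Rightarrow> 'a set \<Rightarrow> 'a set" where
  "out_nbrs A S = {v. \<exists>u\<in>S. (u, v) \<in> A}"

definition Gamma2 :: "('a \<times> 'a) set \<Rightarrow> 'a set \<Rightarrow> 'a set" where
  "Gamma2 A S = S \<union> out_nbrs A S \<union> out_nbrs A (out_nbrs A S)"

definition independent :: "('a \<times> 'a) set \<Rightarrow> 'a set \<Rightarrow> bool" where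
  "independent A Q \<longleftrightarrow> (\<forall>u\<in>Q. \<forall>v\<in>Q. (u, v) \<notin> A)"

definition quasi_kernel :: "'a set \<Rightarrow> ('a \<times> 'a) set \<Rightarrow> 'a set \<Rightarrow> bool" where
  "quasi_kernel V A Q \<longleftrightarrow> Q \<subseteq> V \<and> independent A Q \<and> Gamma2 A Q = V"

definition oriented :: "('a \<times> 'a) set \<Rightarrow> bool" where
  "oriented A \<longleftrightarrow> (\<forall>u v. (u, v) \<in> A \<longrightarrow> (v, u) \<notin> A)"

definition uadj :: "('a \<times> 'a) set \<Rightarrow> 'a \<Rightarrow> 'a \<Rightarrow> bool" where
  "uadj A u v \<longleftrightarrow> (u, v) \<in> A \<or> (v, u) \<in> A"

definition uconnected :: "'a set \<Rightarrow> ('a \<times> 'a) set \<Rightarrow> bool" where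
  "uconnected V A \<longleftrightarrow> V \<noteq> {} \<and> (\<forall>u\<in>V. \<forall>v\<in>V. (u, v) \<in> (A \<union> A\<inverse>)\<^sup>*)"

definition is_ucycle :: "('a \<times> 'a) set \<Rightarrow> 'a list \<Rightarrow> bool" where
  "is_ucycle A cs \<longleftrightarrow> length cs \<ge> 3 \<and> distinct cs \<and>
     (\<forall>i < length cs. uadj A (cs ! i) (cs ! ((i + 1) mod length cs)))"

text \<open>The edge set of a cycle (a cycle as a subgraph is determined by its edges).\<close>
definition cycle_edges :: "'a list \<Rightarrow> 'a set set" where
  "cycle_edges cs = {{cs ! i, cs ! ((i + 1) mod length cs)} | i. i < length cs}"

definition unique_cycle :: "('a \<times> 'a) set \<Rightarrow> bool" where
  "unique_cycle A \<longleftrightarrow> card {cycle_edges cs | cs. is_ucycle A cs} = 1"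

definition cyc_arcs :: "nat \<Rightarrow> (nat \<times> nat) set" where
  "cyc_arcs n = {(i, (i + 1) mod n) | i. i < n}"

end

theory Submission
  imports Defs
begin

lemma part2:
  assumes "n \<ge> 4" "n mod 3 = 1" "quasi_kernel {0..<n} (cyc_arcs n) Q"
  shows "3 * card Q \<ge> n + 2"
proof -
  have QV: "Q \<subseteq> {0..<n}" and G: "Gamma2 (cyc_arcs n) Q = {0..<n}"
    using assms(3) unfolding quasi_kernel_def by auto
  have fin: "finite Q" using QV finite_subset by blast
  let ?f = "\<lambda>x. (x+1) mod n"
  have o1: "out_nbrs (cyc_arcs n) S \<subseteq> ?f ` S" for S
    unfolding out_nbrs_def cyc_arcs_def by auto
  have o2: "out_nbrs (cyc_arcs n) (out_nbrs (cyc_arcs n) Q) \<subseteq> ?f ` ?f ` Q"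
    using o1 by (meson image_mono order_trans)
  have "{0..<n} \<subseteq> Q \<union> ?f ` Q \<union> ?f ` ?f ` Q"
    using G o1[of Q] o2 unfolding Gamma2_def by blast
  hence "n \<le> card (Q \<union> ?f ` Q \<union> ?f ` ?f ` Q)"
    using card_mono[of "Q \<union> ?f ` Q \<union> ?f ` ?f ` Q" "{0..<n}"] fin by auto
  also have "... \<le> card Q + card (?f ` Q) + card (?f ` ?f ` Q)"
    by (meson card_Un_le add_mono le_trans order_refl)
  also have "... \<le> 3 * card Q"
  proof -
    have "card (?f ` Q) \<le> card Q" using card_image_le[OF fin] by blast
    moreover have "card (?f ` ?f ` Q) \<le> card (?f ` Q)" using card_image_le finite_imageI[OF fin] by blast
    ultimately show ?thesis by linarith
  qed
  finally have "n \<le> 3 * card Q" .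
  moreover have "3 * card Q \<noteq> n" using assms(2) by auto
  moreover have "3 * card Q \<noteq> n + 1"
  proof
    assume "3 * card Q = n + 1"
    hence "(n+1) mod 3 = 0" by (metis mod_mult_self1_is_0)
    thus False using assms(2) by (simp add: mod_Suc)
  qed
  ultimately show ?thesis by linarith
qed

lemma m3: "(x::nat) mod 3 = 0 \<or> x mod 3 = 1 \<or> x mod 3 = 2" by linarith

lemma ar1: "(x::nat) mod 3 = (y+2) mod 3 \<Longrightarrow> j < 3 \<Longrightarrow> x mod 3 = j \<or> (x+2) mod 3 = j \<or> y mod 3 = j"
  using m3[of x] m3[of y] m3[of z] m3[of j] by (auto simp: mod_Suc)
lemma ar2: "(x::nat) mod 3 = (y+1) mod 3 \<Longrightarrow> j < 3 \<Longrightarrow> x mod 3 = j \<or> y mod 3 = j \<or> (y+2) mod 3 = j"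
  using m3[of x] m3[of y] m3[of z] m3[of j] by (auto simp: mod_Suc)
lemma ar3: "(x::nat) mod 3 = (y+1) mod 3 \<Longrightarrow> y mod 3 = (z+1) mod 3 \<Longrightarrow> j < 3 \<Longrightarrow> x mod 3 = j \<or> y mod 3 = j \<or> z mod 3 = j"
  using m3[of x] m3[of y] m3[of z] m3[of j] by (auto simp: mod_Suc)

lemma ar4: "(y::nat) mod 3 = (x+2) mod 3 \<Longrightarrow> x mod 3 = j \<Longrightarrow> y mod 3 \<noteq> j \<and> (y+2) mod 3 \<noteq> j"
  using m3[of x] m3[of y] m3[of z] m3[of j] by (auto simp: mod_Suc)
lemma ar5: "(y::nat) mod 3 = (x+1) mod 3 \<Longrightarrow> y mod 3 = j \<Longrightarrow> x mod 3 \<noteq> j \<and> (x+2) mod 3 \<noteq> j"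
  using m3[of x] m3[of y] m3[of z] m3[of j] by (auto simp: mod_Suc)

lemma qk_from_labels:
  fixes V :: "'a set" and A and p :: "'a \<Rightarrow> 'a" and l :: "'a \<Rightarrow> nat" and S
  assumes fin: "finite V"
    and AV: "A \<subseteq> V \<times> V"
    and pA: "\<And>v. v \<in> V \<Longrightarrow> (p v, v) \<in> A"
    and Ap: "\<And>x y. (x,y) \<in> A \<Longrightarrow> x = p y"
    and SV: "S \<subseteq> V" and cS: "card S \<le> 2"
    and l1: "\<And>v. v \<in> V \<Longrightarrow> v \<notin> S \<Longrightarrow> l v mod 3 = (l (p v) + 1) mod 3"
    and l2: "\<And>v. v \<in> S \<Longrightarrow> l v mod 3 = (l (p v) + 2) mod 3"
    and Sadj: "\<And>v. v \<in> S \<Longrightarrow> p v \<notin> S"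
  shows "\<exists>Q. quasi_kernel V A Q \<and> 3 * card Q \<le> card V + 2"
proof -
  define Q where "Q j = {v\<in>V. l v mod 3 = j} \<union> {v\<in>S. (l v + 2) mod 3 = j}" for j
  have pV: "v \<in> V \<Longrightarrow> p v \<in> V" for v using pA AV by blast
  have qk: "quasi_kernel V A (Q j)" if j3: "j < 3" for j
  proof -
    have sub: "Q j \<subseteq> V" using SV unfolding Q_def by auto
    have ind: "independent A (Q j)"
      unfolding independent_def
    proof (intro ballI notI)
      fix x y assume x: "x \<in> Q j" and y: "y \<in> Q j" and xy: "(x,y) \<in> A"
      hence xp: "x = p y" using Ap by blast
      have yV: "y \<in> V" using xy AV by auto
      show False
      proof (cases "y \<in> S")
        case True
        hence xS: "x \<notin> S" using Sadj xp by auto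
        have "l y mod 3 = (l x + 2) mod 3" using l2[OF True] xp by simp
        moreover have "l x mod 3 = j" using x xS unfolding Q_def by blast
        ultimately have "l y mod 3 \<noteq> j \<and> (l y + 2) mod 3 \<noteq> j" by (rule ar4)
        then show False using y unfolding Q_def by blast
      next
        case False
        have "l y mod 3 = (l x + 1) mod 3" using l1[OF yV False] xp by simp
        moreover have "l y mod 3 = j" using y False unfolding Q_def by blast
        ultimately have "l x mod 3 \<noteq> j \<and> (l x + 2) mod 3 \<noteq> j" by (rule ar5)
        then show False using x unfolding Q_def by blast
      qed
    qed
    have cov: "v \<in> Q j \<or> p v \<in> Q j \<or> p (p v) \<in> Q j" if vV: "v \<in> V" for v
    proof -
      have pvV: "p v \<in> V" using pV vV .
      have ppvV: "p (p v) \<in> V" using pV pvV by blast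
      show ?thesis
      proof (cases "v \<in> S")
        case True
        hence "p v \<notin> S" using Sadj by auto
        then have e1: "l (p v) mod 3 = (l (p (p v)) + 1) mod 3" using l1 pvV by blast
        have e2: "l v mod 3 = (l (p v) + 2) mod 3" using l2 True by blast
        have "l v mod 3 = j \<or> (l v + 2) mod 3 = j \<or> l (p v) mod 3 = j"
          using ar1[OF e2 j3] .
        then show ?thesis unfolding Q_def using True vV pvV by blast
      next
        case False
        note e1 = l1[OF vV False]
        show ?thesis
        proof (cases "p v \<in> S")
          case True
          note e2 = l2[OF True]
          have "l v mod 3 = j \<or> l (p v) mod 3 = j \<or> (l (p v) + 2) mod 3 = j"
            using ar2[OF e1 j3] .
          then show ?thesis unfolding Q_def using True vV pvV by blast
        next
          case F2: False
          note e2 = l1[OF pvV F2]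
          have "l v mod 3 = j \<or> l (p v) mod 3 = j \<or> l (p (p v)) mod 3 = j"
            using ar3[OF e1 e2 j3] .
          then show ?thesis unfolding Q_def using vV pvV ppvV by blast
        qed
      qed
    qed
    have "Gamma2 A (Q j) = V"
    proof
      show "Gamma2 A (Q j) \<subseteq> V" using sub AV unfolding Gamma2_def out_nbrs_def by auto
      show "V \<subseteq> Gamma2 A (Q j)"
      proof
        fix v assume vV: "v \<in> V"
        have pvV: "p v \<in> V" using pV vV .
        have a1: "(p v, v) \<in> A" using pA vV by blast
        have a2: "(p (p v), p v) \<in> A" using pA pvV by blast
        from cov[OF vV] show "v \<in> Gamma2 A (Q j)"
          unfolding Gamma2_def out_nbrs_def using a1 a2 by blast
      qed
    qed
    then show ?thesis using sub ind unfolding quasi_kernel_def by blast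
  qed
  define B where "B j = {v\<in>V. l v mod 3 = j}" for j
  define C where "C j = {v\<in>S. (l v + 2) mod 3 = j}" for j
  have finS: "finite S" using SV fin finite_subset by blast
  have cQ: "card (Q j) \<le> card (B j) + card (C j)" for j
    unfolding Q_def B_def C_def by (rule card_Un_le)
  have e: "V = B 0 \<union> B 1 \<union> B 2" unfolding B_def by auto
  have fB: "finite (B j)" for j using fin unfolding B_def by auto
  have d1: "B 0 \<inter> B 1 = {}" "(B 0 \<union> B 1) \<inter> B 2 = {}" unfolding B_def by auto
  have cV: "card V = card (B 0) + card (B 1) + card (B 2)"
    apply (subst e)
    apply (subst card_Un_disjoint[OF _ fB d1(2)])
     apply (simp add: fB)
    apply (subst card_Un_disjoint[OF fB fB d1(1)])
    by simp
  have e2: "S = C 0 \<union> C 1 \<union> C 2" unfolding C_def by auto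
  have fC: "finite (C j)" for j using finS unfolding C_def by auto
  have d2: "C 0 \<inter> C 1 = {}" "(C 0 \<union> C 1) \<inter> C 2 = {}" unfolding C_def by auto
  have cSS: "card S = card (C 0) + card (C 1) + card (C 2)"
    apply (subst e2)
    apply (subst card_Un_disjoint[OF _ fC d2(2)])
     apply (simp add: fC)
    apply (subst card_Un_disjoint[OF fC fC d2(1)])
    by simp
  have "\<exists>j<3. 3 * card (Q j) \<le> card V + 2"
  proof (rule ccontr)
    assume "\<not> ?thesis"
    hence "\<And>j. j < 3 \<Longrightarrow> 3 * card (Q j) > card V + 2" by auto
    from this[of 0] this[of 1] this[of 2] cQ[of 0] cQ[of 1] cQ[of 2] cV cSS cS
    show False by linarith
  qed
  then show ?thesis using qk by blast
qed



lemma uadj_sym: "uadj A x y = uadj A y x" unfolding uadj_def by blast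

lemma ucycle_intro:
  assumes "length cs \<ge> 3" "distinct cs" "successively (uadj A) cs" "uadj A (last cs) (hd cs)"
  shows "is_ucycle A cs"
  unfolding is_ucycle_def
proof (intro conjI allI impI)
  fix i assume i: "i < length cs"
  show "uadj A (cs ! i) (cs ! ((i + 1) mod length cs))"
  proof (cases "Suc i < length cs")
    case True
    then show ?thesis using successively_nth[OF assms(3) True] by simp
  next
    case False
    hence "i = length cs - 1" using i by simp
    moreover have "cs \<noteq> []" using assms(1) by auto
    ultimately show ?thesis using assms(4) i
      by (simp add: last_conv_nth hd_conv_nth)
  qed
qed (use assms in auto)

lemma succ_map_upt:
  "(\<And>i. Suc i < n \<Longrightarrow> R (f i) (f (Suc i))) \<Longrightarrow> successively R (map f [0..<n])"
  by (simp add: successively_conv_nth)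

locale fg =
  fixes V :: "'a set" and A :: "('a\<times>'a) set" and p :: "'a \<Rightarrow> 'a"
  assumes finV: "finite V" and AV: "A \<subseteq> V \<times> V" and noloop: "\<And>v. (v,v) \<notin> A"
    and ori: "oriented A"
    and pA: "\<And>v. v \<in> V \<Longrightarrow> (p v, v) \<in> A"
begin

lemma pV: "v \<in> V \<Longrightarrow> p v \<in> V" using pA AV by blast
lemma pne: "v \<in> V \<Longrightarrow> p v \<noteq> v" using pA noloop by metis
lemma ppne: "v \<in> V \<Longrightarrow> p (p v) \<noteq> v"
proof
  assume v: "v \<in> V" and e: "p (p v) = v"
  have "(p (p v), p v) \<in> A" using pA pV v by blast
  hence "(v, p v) \<in> A" using e by simp
  moreover have "(p v, v) \<in> A" using pA v by blast
  ultimately show False using ori unfolding oriented_def by blast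
qed
lemma powV: "v \<in> V \<Longrightarrow> (p^^n) v \<in> V" by (induction n) (auto simp: pV)

lemma uadj_p: "v \<in> V \<Longrightarrow> uadj A v (p v)" using pA unfolding uadj_def by blast

lemma pigeon: assumes "v \<in> V" shows "\<exists>i j. i < j \<and> (p^^i) v = (p^^j) v"
proof (rule ccontr)
  assume nq: "\<not> ?thesis"
  have "inj_on (\<lambda>i. (p^^i) v) {0..card V}"
  proof (rule inj_onI, rule ccontr)
    fix i j assume e: "(p^^i) v = (p^^j) v" and ne: "i \<noteq> j"
    show False
    proof (cases "i < j")
      case True thus False using nq e by blast
    next
      case False hence "j < i" using ne by simp
      thus False using nq e by metis
    qed
  qed
  moreover have "(\<lambda>i. (p^^i) v) ` {0..card V} \<subseteq> V" using powV assms by auto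
  ultimately have "card {0..card V} \<le> card V" using card_inj_on_le finV by blast
  thus False by simp
qed

lemma minper:
  assumes "0 < k0" "(p^^k0) y = y"
  shows "\<exists>k. 0 < k \<and> (p^^k) y = y \<and> (\<forall>m. 0 < m \<longrightarrow> m < k \<longrightarrow> (p^^m) y \<noteq> y)"
proof -
  define k where "k = (LEAST m. 0 < m \<and> (p^^m) y = y)"
  have "0 < k \<and> (p^^k) y = y" unfolding k_def by (rule LeastI[of _ k0]) (use assms in auto)
  moreover have "\<forall>m. 0 < m \<longrightarrow> m < k \<longrightarrow> (p^^m) y \<noteq> y"
    unfolding k_def using not_less_Least by blast
  ultimately show ?thesis by blast
qed

lemma orbit_cycle:
  assumes c: "c \<in> V" and k: "0 < k" "(p^^k) c = c" and mn: "\<And>m. 0 < m \<Longrightarrow> m < k \<Longrightarrow> (p^^m) c \<noteq> c"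
  shows "is_ucycle A (map (\<lambda>i. (p^^i) c) [0..<k])" (is ?A)
    and "\<And>e. e \<in> cycle_edges (map (\<lambda>i. (p^^i) c) [0..<k]) \<Longrightarrow> \<exists>i<k. e = {(p^^i) c, (p^^(Suc i)) c}" (is "\<And>e. ?P e \<Longrightarrow> ?Q e")
    and "{c, p c} \<in> cycle_edges (map (\<lambda>i. (p^^i) c) [0..<k])"
    and "k \<ge> 3"
proof -
  have k3: "k \<ge> 3"
  proof (rule ccontr)
    assume "\<not> k \<ge> 3"
    hence "k = 1 \<or> k = 2" using k by auto
    thus False
    proof
      assume "k = 1" thus False using k(2) pne[OF c] by simp
    next
      assume "k = 2" thus False using k(2) ppne[OF c] by (simp add: numeral_2_eq_2)
    qed
  qed
  then show "k \<ge> 3" .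
  let ?cs = "map (\<lambda>i. (p^^i) c) [0..<k]"
  have nxt: "?cs ! ((i + 1) mod k) = (p^^(Suc i)) c" if "i < k" for i
  proof (cases "Suc i < k")
    case True then show ?thesis by simp
  next
    case False
    hence "Suc i = k" using that by simp
    thus ?thesis using k by simp
  qed
  show ?A
  proof (rule ucycle_intro)
    show "3 \<le> length ?cs" using k3 by simp
    show "distinct ?cs"
      unfolding distinct_map
    proof
      show "inj_on (\<lambda>i. (p^^i) c) (set [0..<k])"
      proof (rule inj_onI, rule ccontr)
        fix i j assume i: "i \<in> set [0..<k]" and j: "j \<in> set [0..<k]" and e: "(p^^i) c = (p^^j) c" and ne: "i \<noteq> j"
        have key: False if "a < b" "b < k" "(p^^a) c = (p^^b) c" for a b
        proof -
          have "(p^^(k - b + a)) c = (p^^(k-b)) ((p^^a) c)" by (simp add: funpow_add)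
          also have "\<dots> = (p^^(k-b)) ((p^^b) c)" using that(3) by (rule arg_cong)
          also have "\<dots> = (p^^(k - b + b)) c" by (simp add: funpow_add)
          also have "\<dots> = (p^^k) c" using that(2) by simp
          finally have e2: "(p^^(k - b + a)) c = c" using k(2) by simp
          have l1: "0 < k - b + a" using that(1,2) by linarith
          have l2: "k - b + a < k" using that(1,2) by linarith
          show False using mn[OF l1 l2] e2 by simp
        qed
        have ik: "i < k" and jk: "j < k" using i j by auto
        show False
        proof (cases "i < j")
          case True thus ?thesis using key[of i j] e jk by blast
        next
          case False hence "j < i" using ne by simp
          thus ?thesis using key[of j i] e ik by simp
        qed
      qed
    qed simp
    show "successively (uadj A) ?cs"
    proof (rule succ_map_upt)
      fix i show "uadj A ((p^^i) c) ((p^^(Suc i)) c)" using uadj_p[OF powV[OF c, of i]] by simp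
    qed
    have l: "last ?cs = (p^^(k-1)) c" using k by (simp add: last_map)
    have h: "hd ?cs = c" using k by (simp add: hd_map)
    have "p ((p^^(k-1)) c) = c" using k by (metis Suc_diff_1 funpow.simps(2) o_apply)
    then show "uadj A (last ?cs) (hd ?cs)" using uadj_p[OF powV[OF c, of "k-1"]] l h by simp
  qed
  show "?Q e" if "?P e" for e
  proof -
    from that obtain i where i: "i < k" and e: "e = {?cs ! i, ?cs ! ((i + 1) mod k)}"
      unfolding cycle_edges_def by auto
    show ?thesis using i e nxt[OF i] by auto
  qed
  have "{?cs ! 0, ?cs ! ((0 + 1) mod k)} \<in> cycle_edges ?cs"
    unfolding cycle_edges_def by (rule CollectI, rule exI[of _ 0]) (use k in simp)
  then show "{c, p c} \<in> cycle_edges ?cs" using nxt[of 0] k by simp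
qed

lemma merged_cycle:
  assumes uv: "(u,v) \<in> A" and nu: "u \<noteq> p v" and meet: "(p^^i0) v = (p^^j0) u"
  shows "\<exists>cs. is_ucycle A cs \<and> {u,v} \<in> cycle_edges cs"
proof -
  have uV: "u \<in> V" and vV: "v \<in> V" using uv AV by auto
  define N where "N = (LEAST n. \<exists>i j. i + j = n \<and> (p^^i) v = (p^^j) u)"
  have "\<exists>i j. i + j = N \<and> (p^^i) v = (p^^j) u"
    unfolding N_def by (rule LeastI[of _ "i0+j0"]) (use meet in blast)
  then obtain a b where ab: "a + b = N" and m: "(p^^a) v = (p^^b) u" by blast
  have minl: "a + b \<le> i + j" if "(p^^i) v = (p^^j) u" for i j
    unfolding ab N_def by (rule Least_le) (use that in blast)
  define U where "U = map (\<lambda>i. (p^^i) u) [0..<Suc b]"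
  define W where "W = map (\<lambda>i. (p^^i) v) [0..<a]"
  define L where "L = U @ rev W"
  have dU: "distinct U"
    unfolding U_def distinct_map
  proof (intro conjI distinct_upt inj_onI, rule ccontr)
    fix i j assume i: "i \<in> set [0..<Suc b]" and j: "j \<in> set [0..<Suc b]"
      and e: "(p^^i) u = (p^^j) u" and ne: "i \<noteq> j"
    have key: False if "x < y" "y \<le> b" "(p^^x) u = (p^^y) u" for x y
    proof -
      have "(p^^(b - y + x)) u = (p^^(b-y)) ((p^^x) u)" by (simp add: funpow_add)
      also have "\<dots> = (p^^(b-y)) ((p^^y) u)" using that(3) by (rule arg_cong)
      also have "\<dots> = (p^^(b - y + y)) u" by (simp add: funpow_add)
      also have "\<dots> = (p^^b) u" using that(2) by simp
      finally have "(p^^a) v = (p^^(b - y + x)) u" using m by simp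
      hence "a + b \<le> a + (b - y + x)" by (rule minl)
      thus False using that(1,2) by linarith
    qed
    have ib: "i \<le> b" and jb: "j \<le> b" using i j by auto
    show False
    proof (cases "i < j")
      case True thus ?thesis using key[of i j] e jb by blast
    next
      case False hence "j < i" using ne by simp
      thus ?thesis using key[of j i] e ib by simp
    qed
  qed
  have dW: "distinct W"
    unfolding W_def distinct_map
  proof (intro conjI distinct_upt inj_onI, rule ccontr)
    fix i j assume i: "i \<in> set [0..<a]" and j: "j \<in> set [0..<a]"
      and e: "(p^^i) v = (p^^j) v" and ne: "i \<noteq> j"
    have key: False if "x < y" "y < a" "(p^^x) v = (p^^y) v" for x y
    proof -
      have "(p^^(a - y + x)) v = (p^^(a-y)) ((p^^x) v)" by (simp add: funpow_add)
      also have "\<dots> = (p^^(a-y)) ((p^^y) v)" using that(3) by (rule arg_cong)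
      also have "\<dots> = (p^^(a - y + y)) v" by (simp add: funpow_add)
      also have "\<dots> = (p^^a) v" using that(2) by simp
      finally have "(p^^(a - y + x)) v = (p^^b) u" using m by simp
      hence "a + b \<le> (a - y + x) + b" by (rule minl)
      thus False using that(1,2) by linarith
    qed
    have ia: "i < a" and ja: "j < a" using i j by auto
    show False
    proof (cases "i < j")
      case True thus ?thesis using key[of i j] e ja by blast
    next
      case False hence "j < i" using ne by simp
      thus ?thesis using key[of j i] e ia by simp
    qed
  qed
  have disj: "set U \<inter> set W = {}"
  proof (rule ccontr)
    assume "set U \<inter> set W \<noteq> {}"
    then obtain j i where j: "j < Suc b" and i: "i < a" and e: "(p^^j) u = (p^^i) v"
      unfolding U_def W_def set_map set_upt by (auto simp del: upt_Suc)
    have "a + b \<le> i + j" using minl e by simp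
    thus False using i j by linarith
  qed
  have dL: "distinct L" unfolding L_def using dU dW disj by simp
  have lenL: "length L = Suc b + a" unfolding L_def U_def W_def by simp
  have len3: "length L \<ge> 3"
  proof (rule ccontr)
    assume "\<not> length L \<ge> 3"
    hence "a + b \<le> 1" using lenL by simp
    hence "(a = 0 \<and> b = 0) \<or> (a = 1 \<and> b = 0) \<or> (a = 0 \<and> b = 1)" by linarith
    thus False
    proof (elim disjE conjE)
      assume "a = 0" "b = 0" hence "v = u" using m by simp
      thus False using uv noloop by simp
    next
      assume "a = 1" "b = 0" hence "p v = u" using m by simp
      thus False using nu by simp
    next
      assume "a = 0" "b = 1" hence "v = p u" using m by simp
      hence "(v, u) \<in> A" using pA uV by simp
      thus False using uv ori unfolding oriented_def by blast
    qed
  qed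
  have hdL: "hd L = u" unfolding L_def U_def by (simp del: upt_Suc add: hd_map)
  have lastL: "last L = v"
  proof (cases "a = 0")
    case True
    hence "last L = (p^^b) u" unfolding L_def U_def W_def by simp
    thus ?thesis using m True by simp
  next
    case False
    hence "last L = last (rev W)" unfolding L_def W_def by simp
    also have "\<dots> = hd W" by (simp add: last_rev)
    also have "\<dots> = v" unfolding W_def using False by (simp add: hd_map)
    finally show ?thesis .
  qed
  have sU: "successively (uadj A) U"
    unfolding U_def
  proof (rule succ_map_upt)
    fix i show "uadj A ((p^^i) u) ((p^^(Suc i)) u)" using uadj_p[OF powV[OF uV, of i]] by simp
  qed
  have sW: "successively (uadj A) (rev W)"
    unfolding successively_rev W_def
  proof (rule succ_map_upt)
    fix i show "uadj A ((p^^(Suc i)) v) ((p^^i) v)" using uadj_p[OF powV[OF vV, of i]] uadj_sym[of A] by simp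
  qed
  have junc: "uadj A (last U) (hd (rev W))" if "a \<noteq> 0"
  proof -
    have "last U = (p^^b) u" unfolding U_def by simp
    moreover have "hd (rev W) = (p^^(a-1)) v" unfolding W_def using that by (simp add: hd_rev last_map)
    moreover have "p ((p^^(a-1)) v) = (p^^a) v" using that by (metis Suc_diff_1 funpow.simps(2) neq0_conv o_apply)
    ultimately show ?thesis using uadj_p[OF powV[OF vV, of "a-1"]] m uadj_sym by metis
  qed
  have sL: "successively (uadj A) L"
    unfolding L_def successively_append_iff
  proof (intro conjI sU sW)
    show "U = [] \<or> rev W = [] \<or> uadj A (last U) (hd (rev W))"
      using junc unfolding W_def by (cases "a = 0") auto
  qed
  have "uadj A (last L) (hd L)" using lastL hdL uv unfolding uadj_def by simp
  hence cyc: "is_ucycle A L" using ucycle_intro len3 dL sL by blast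
  have Lne: "L \<noteq> []" using len3 by auto
  have "{L ! (length L - 1), L ! ((length L - 1 + 1) mod length L)} \<in> cycle_edges L"
    unfolding cycle_edges_def by (rule CollectI, rule exI[of _ "length L - 1"]) (use len3 in simp)
  moreover have "L ! (length L - 1) = v" using lastL last_conv_nth[OF Lne] by simp
  moreover have "L ! ((length L - 1 + 1) mod length L) = u" 
  proof -
    have "length L - 1 + 1 = length L" using len3 by simp
    thus ?thesis using hdL hd_conv_nth[OF Lne] by simp
  qed
  ultimately have "{v, u} \<in> cycle_edges L" by simp
  hence "{u, v} \<in> cycle_edges L" by (simp add: insert_commute)
  thus ?thesis using cyc by blast
qed

lemma fg_structure:
  assumes uc: "unique_cycle A" and ne: "V \<noteq> {}"
  shows "\<exists>c k. c \<in> V \<and> 3 \<le> k \<and> (p^^k) c = c \<and> (\<forall>m. 0 < m \<longrightarrow> m < k \<longrightarrow> (p^^m) c \<noteq> c)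
     \<and> (\<forall>v\<in>V. \<exists>m. (p^^m) v = c) \<and> (\<forall>x y. (x,y) \<in> A \<longrightarrow> x = p y)"
proof -
  let ?CE = "{cycle_edges cs | cs. is_ucycle A cs}"
  have "card ?CE = 1" using uc unfolding unique_cycle_def .
  then obtain E0 where E0: "?CE = {E0}" by (rule card_1_singletonE)
  have allE: "cycle_edges cs = E0" if "is_ucycle A cs" for cs using E0 that by blast
  have periodic: "\<exists>y m k. (p^^m) v = y \<and> 0 < k \<and> (p^^k) y = y \<and> (\<forall>m. 0 < m \<longrightarrow> m < k \<longrightarrow> (p^^m) y \<noteq> y)"
    if vV0: "v \<in> V" for v
  proof -
    obtain i j where ij: "i < j" "(p^^i) v = (p^^j) v" using pigeon[OF vV0] by blast
    have "(p^^(j-i)) ((p^^i) v) = (p^^(j-i+i)) v" by (simp add: funpow_add)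
    also have "\<dots> = (p^^i) v" using ij by simp
    finally have "(p^^(j-i)) ((p^^i) v) = (p^^i) v" .
    moreover have "0 < j - i" using ij by simp
    ultimately show ?thesis using minper by blast
  qed
  obtain v0 where v0: "v0 \<in> V" using ne by blast
  obtain m0 c k where c0: "(p^^m0) v0 = c" and k: "0 < k" "(p^^k) c = c"
    and mn: "\<forall>m. 0 < m \<longrightarrow> m < k \<longrightarrow> (p^^m) c \<noteq> c"
    using periodic[OF v0] by blast
  have cV: "c \<in> V" using c0 powV v0 by blast
  note oc = orbit_cycle[OF cV k, OF mn[rule_format]]
  have E0c: "cycle_edges (map (\<lambda>i. (p^^i) c) [0..<k]) = E0" using allE oc(1) by blast
  have reach: "\<exists>m. (p^^m) v = c" if vV: "v \<in> V" for v
  proof -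
    obtain m y k' where y: "(p^^m) v = y" and k': "0 < k'" "(p^^k') y = y"
      and mn': "\<forall>m. 0 < m \<longrightarrow> m < k' \<longrightarrow> (p^^m) y \<noteq> y"
      using periodic[OF vV] by blast
    have yV: "y \<in> V" using y powV vV by blast
    note oy = orbit_cycle[OF yV k', OF mn'[rule_format]]
    have "{y, p y} \<in> E0" using oy(3) allE oy(1) by blast
    then obtain i where i: "i < k" and e: "{y, p y} = {(p^^i) c, (p^^(Suc i)) c}"
      using oc(2) E0c by blast
    have "\<exists>t\<le>k. y = (p^^t) c"
    proof -
      have "y = (p^^i) c \<or> y = (p^^(Suc i)) c" using e by (metis insertI1 insert_iff singleton_iff)
      thus ?thesis using i by (metis Suc_leI less_imp_le_nat)
    qed
    then obtain t where t: "t \<le> k" "y = (p^^t) c" by blast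
    have "(p^^(k - t + m)) v = (p^^(k-t)) ((p^^m) v)" by (simp add: funpow_add)
    also have "\<dots> = (p^^(k-t)) ((p^^t) c)" using y t by simp
    also have "\<dots> = (p^^(k - t + t)) c" by (simp add: funpow_add)
    also have "\<dots> = c" using t(1) k by simp
    finally show ?thesis by blast
  qed
  have func: "x = p y" if xy: "(x,y) \<in> A" for x y
  proof (rule ccontr)
    assume nu: "x \<noteq> p y"
    have xV: "x \<in> V" and yV: "y \<in> V" using xy AV by auto
    obtain mx where mx: "(p^^mx) x = c" using reach[OF xV] by blast
    obtain my where my: "(p^^my) y = c" using reach[OF yV] by blast
    have "(p^^my) y = (p^^mx) x" using mx my by simp
    from merged_cycle[OF xy nu this] obtain cs where cs: "is_ucycle A cs" "{x, y} \<in> cycle_edges cs"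
      by blast
    have "{x,y} \<in> E0" using cs allE by blast
    then obtain i where i: "i < k" and e: "{x, y} = {(p^^i) c, (p^^(Suc i)) c}"
      using oc(2) E0c by blast
    define z where "z = (p^^i) c"
    have zV: "z \<in> V" unfolding z_def using powV cV by blast
    have e2: "{x,y} = {z, p z}" using e unfolding z_def by simp
    show False
    proof (cases "x = z")
      case True
      hence "y = p z" using e2 by (metis doubleton_eq_iff)
      hence "(y, x) \<in> A" using pA zV True by simp
      thus False using xy ori unfolding oriented_def by blast
    next
      case False
      hence "x = p z" "y = z" using e2 by (metis doubleton_eq_iff)+
      thus False using nu by simp
    qed
  qed
  show ?thesis using cV oc(4) k mn reach func by blast
qed

lemma labels:
  assumes cV: "c \<in> V" and k3: "3 \<le> k" and kc: "(p^^k) c = c"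
    and mn: "\<And>m. 0 < m \<Longrightarrow> m < k \<Longrightarrow> (p^^m) c \<noteq> c"
    and reach: "\<And>v. v \<in> V \<Longrightarrow> \<exists>m. (p^^m) v = c"
  shows "\<exists>(l::'a \<Rightarrow> nat) S. S \<subseteq> V \<and> card S \<le> 2 \<and> (\<forall>v\<in>V. v \<notin> S \<longrightarrow> l v mod 3 = (l (p v) + 1) mod 3)
      \<and> (\<forall>v\<in>S. l v mod 3 = (l (p v) + 2) mod 3) \<and> (\<forall>v\<in>S. p v \<notin> S)"
proof -
  define D where "D v = (LEAST m. (p^^m) v = c)" for v
  have DI: "(p^^(D v)) v = c" if "v \<in> V" for v
    unfolding D_def using reach[OF that] by (rule LeastI_ex)
  have Dle: "D v \<le> m" if "(p^^m) v = c" for v m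
    unfolding D_def using that by (rule Least_le)
  have Dc: "D c = 0" using Dle[of 0 c] by simp
  have Dstep: "D v = Suc (D (p v))" if vV: "v \<in> V" and vc: "v \<noteq> c" for v
  proof -
    have "D v \<noteq> 0" using DI[OF vV] vc by (metis funpow_0)
    then obtain d where d: "D v = Suc d" by (metis not0_implies_Suc)
    have "(p^^d) (p v) = c" using DI[OF vV] d by (simp add: funpow_Suc_right del: funpow.simps)
    hence a1: "D (p v) \<le> d" by (rule Dle)
    have "(p^^(Suc (D (p v)))) v = c" using DI[OF pV[OF vV]] by (simp add: funpow_Suc_right del: funpow.simps)
    hence a2: "D v \<le> Suc (D (p v))" by (rule Dle)
    show ?thesis using a1 a2 d by simp
  qed
  have Dpc: "D (p c) = k - 1"
  proof -
    have "(p^^(k-1)) (p c) = (p^^(Suc (k-1))) c" by (simp add: funpow_Suc_right del: funpow.simps)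
    also have "Suc (k-1) = k" using k3 by simp
    finally have "(p^^(k-1)) (p c) = c" using kc by simp
    hence a1: "D (p c) \<le> k - 1" by (rule Dle)
    have "(p^^(Suc (D (p c)))) c = c" using DI[OF pV[OF cV]] by (simp add: funpow_Suc_right del: funpow.simps)
    hence "\<not> Suc (D (p c)) < k" using mn by blast
    thus ?thesis using a1 by linarith
  qed
  have pc_ne: "p c \<noteq> c" using pne cV by blast
  consider "k mod 3 = 0" | "k mod 3 = 1" | "k mod 3 = 2" using m3[of k] by auto
  then show ?thesis
  proof cases
    case 1
    have "\<forall>v\<in>V. v \<notin> {} \<longrightarrow> D v mod 3 = (D (p v) + 1) mod 3"
    proof (intro ballI impI)
      fix v assume vV: "v \<in> V"
      show "D v mod 3 = (D (p v) + 1) mod 3"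
      proof (cases "v = c")
        case True
        have "D (p v) + 1 = k" using Dpc True k3 by simp
        thus ?thesis using True Dc 1 by simp
      next
        case False thus ?thesis using Dstep vV by simp
      qed
    qed
    thus ?thesis by (intro exI[of _ D] exI[of _ "{}"]) simp
  next
    case 3
    have "\<forall>v\<in>V. v \<notin> {c} \<longrightarrow> D v mod 3 = (D (p v) + 1) mod 3"
      using Dstep by simp
    moreover have "\<forall>v\<in>{c}. D v mod 3 = (D (p v) + 2) mod 3"
    proof -
      have "D (p c) + 2 = Suc k" using Dpc k3 by simp
      hence "(D (p c) + 2) mod 3 = 0" using 3 by (simp add: mod_Suc)
      thus ?thesis using Dc by simp
    qed
    moreover have "\<forall>v\<in>{c}. p v \<notin> {c}" using pc_ne by simp
    ultimately show ?thesis using cV by (intro exI[of _ D] exI[of _ "{c}"]) simp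
  next
    case 2
    have k4: "4 \<le> k" using k3 2 by (cases "k = 3") auto
    define c2 where "c2 = (p^^(k-2)) c"
    have c2V: "c2 \<in> V" unfolding c2_def using powV cV by blast
    have pc2: "p c2 = (p^^(k-1)) c"
    proof -
      have "p c2 = (p^^(Suc (k-2))) c" unfolding c2_def by simp
      also have "Suc (k-2) = k - 1" using k4 by simp
      finally show ?thesis .
    qed
    have ppc2: "p (p c2) = c"
    proof -
      have "p (p c2) = (p^^(Suc (k-1))) c" using pc2 by simp
      also have "Suc (k-1) = k" using k4 by simp
      finally show ?thesis using kc by simp
    qed
    have pc2_ne: "p c2 \<noteq> c" using pc2 mn[of "k-1"] k4 by simp
    have c2_ne: "c2 \<noteq> c" using mn[of "k-2"] k4 unfolding c2_def by simp
    have Dpc2: "D (p c2) = 1" using Dstep[OF pV[OF c2V] pc2_ne] ppc2 Dc by simp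
    have Dc2: "D c2 = 2" using Dstep[OF c2V c2_ne] Dpc2 by simp
    define R where "R = {v\<in>V. 2 \<le> D v \<and> (p^^(D v - 2)) v = c2}"
    define l where "l v = D v + (if v \<in> R then 1 else 0)" for v
    have cR: "c \<notin> R" unfolding R_def using Dc by simp
    have c2R: "c2 \<in> R" unfolding R_def using Dc2 c2V by simp
    have pc2R: "p c2 \<notin> R" unfolding R_def using Dpc2 by simp
    have pcR: "p c \<in> R"
    proof -
      have "(p^^(k - 3)) (p c) = (p^^(Suc (k - 3))) c" by (simp add: funpow_Suc_right del: funpow.simps)
      also have "Suc (k - 3) = k - 2" using k4 by simp
      finally have e: "(p^^(k - 3)) (p c) = c2" unfolding c2_def .
      have "D (p c) - 2 = k - 3" using Dpc by simp
      hence "(p^^(D (p c) - 2)) (p c) = c2" using e by simp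
      thus ?thesis unfolding R_def using Dpc k4 pV[OF cV] by simp
    qed
    have Rstep: "v \<in> R \<longleftrightarrow> p v \<in> R" if vV: "v \<in> V" and vc: "v \<noteq> c" and vc2: "v \<noteq> c2" for v
    proof -
      have Dv: "D v = Suc (D (p v))" using Dstep vV vc by blast
      have pvV: "p v \<in> V" using pV vV by blast
      show ?thesis
      proof (cases "2 \<le> D (p v)")
        case True
        have "D v - 2 = Suc (D (p v) - 2)" using Dv True by simp
        hence "(p^^(D v - 2)) v = (p^^(D (p v) - 2)) (p v)" by (simp add: funpow_Suc_right del: funpow.simps)
        thus ?thesis unfolding R_def using Dv True vV pvV by simp
      next
        case False
        hence "p v \<notin> R" unfolding R_def by simp
        moreover have "v \<notin> R"
        proof
          assume "v \<in> R"
          hence "2 \<le> D v" "(p^^(D v - 2)) v = c2" unfolding R_def by auto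
          hence "D v = 2" "v = c2" using Dv False by auto
          thus False using vc2 by simp
        qed
        ultimately show ?thesis by simp
      qed
    qed
    have s1: "\<forall>v\<in>V. v \<notin> {c, c2} \<longrightarrow> l v mod 3 = (l (p v) + 1) mod 3"
    proof (intro ballI impI)
      fix v assume vV: "v \<in> V" and vS: "v \<notin> {c, c2}"
      hence "l v = l (p v) + 1" unfolding l_def using Dstep[OF vV] Rstep[OF vV] by simp
      thus "l v mod 3 = (l (p v) + 1) mod 3" by simp
    qed
    have s2: "\<forall>v\<in>{c, c2}. l v mod 3 = (l (p v) + 2) mod 3"
    proof -
      have "l c = 0" unfolding l_def using Dc cR by simp
      moreover have "l (p c) + 2 = Suc (Suc k)" unfolding l_def using Dpc pcR k4 by simp
      moreover have "(Suc (Suc k)) mod 3 = 0" using 2 by (simp add: mod_Suc)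
      moreover have "l c2 = 3" unfolding l_def using Dc2 c2R by simp
      moreover have "l (p c2) = 1" unfolding l_def using Dpc2 pc2R by simp
      ultimately show ?thesis by simp
    qed
    have Dpc_ne: "p c \<noteq> c2" using Dpc Dc2 k4 by auto
    have s3: "\<forall>v\<in>{c, c2}. p v \<notin> {c, c2}" using pc_ne Dpc_ne pc2_ne pne[OF c2V] by auto
    have s0: "card {c, c2} \<le> 2" using c2_ne by simp
    show ?thesis using s0 s1 s2 s3 cV c2V by (intro exI[of _ l] exI[of _ "{c, c2}"]) simp
  qed
qed

end

theorem mainTheorem8:
  shows "(\<forall>(V :: 'a set) A. digraph V A \<and> oriented A \<and> uconnected V A \<and> unique_cycle A
            \<and> (\<forall>v\<in>V. \<not> source V A v)
          \<longrightarrow> (\<exists>Q. quasi_kernel V A Q \<and> 3 * card Q \<le> card V + 2))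
       \<and> (\<forall>n::nat. n \<ge> 4 \<and> n mod 3 = 1 \<longrightarrow>
           (\<forall>Q. quasi_kernel {0..<n} (cyc_arcs n) Q \<longrightarrow> 3 * card Q \<ge> n + 2))"
proof (intro conjI allI impI)
  fix V :: "'a set" and A
  assume H: "digraph V A \<and> oriented A \<and> uconnected V A \<and> unique_cycle A
            \<and> (\<forall>v\<in>V. \<not> source V A v)"
  have fin: "finite V" and AV: "A \<subseteq> V \<times> V" and nl: "\<And>v. (v,v) \<notin> A"
    using H unfolding digraph_def by auto
  have ori: "oriented A" and uc: "unique_cycle A" using H by auto
  have ne: "V \<noteq> {}" using H unfolding uconnected_def by auto
  have ex: "\<exists>u. (u,v) \<in> A" if "v \<in> V" for v using H that unfolding source_def by auto
  define p where "p v = (SOME u. (u,v) \<in> A)" for v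
  have pA: "(p v, v) \<in> A" if "v \<in> V" for v unfolding p_def using ex[OF that] by (rule someI_ex)
  interpret fg V A p using fin AV nl ori pA by unfold_locales auto
  obtain c k where ck: "c \<in> V" "3 \<le> k" "(p^^k) c = c"
    and mn: "\<forall>m. 0 < m \<longrightarrow> m < k \<longrightarrow> (p^^m) c \<noteq> c"
    and reach: "\<forall>v\<in>V. \<exists>m. (p^^m) v = c" and func: "\<forall>x y. (x,y) \<in> A \<longrightarrow> x = p y"
    using fg_structure[OF uc ne] by blast
  obtain l :: "'a \<Rightarrow> nat" and S where S: "S \<subseteq> V" "card S \<le> 2"
    and l1: "\<forall>v\<in>V. v \<notin> S \<longrightarrow> l v mod 3 = (l (p v) + 1) mod 3"
    and l2: "\<forall>v\<in>S. l v mod 3 = (l (p v) + 2) mod 3" and Sa: "\<forall>v\<in>S. p v \<notin> S"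
    using labels[OF ck mn[rule_format]] reach by blast
  show "\<exists>Q. quasi_kernel V A Q \<and> 3 * card Q \<le> card V + 2"
    by (rule qk_from_labels[OF fin AV pA _ S]) (use func l1 l2 Sa in auto)
next
  fix n :: nat and Q
  assume "4 \<le> n \<and> n mod 3 = 1" and "quasi_kernel {0..<n} (cyc_arcs n) Q"
  then show "n + 2 \<le> 3 * card Q" using part2 by blast
qed

end
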